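(* For every integer $k\ge 2$, no online algorithm achieves a competitive ratio better than $\frac76$ for the ATWC dispersion problem for arbitrary $k$-dimensional polytopes; that is, there is no online algorithm that is $\sigma$-competitive with $\sigma<\frac76$ for every $k$-dimensional polytope $P$.
   Context: Let $P\subset\mathbb{R}^k$ be a $k$-dimensional polytope with boundary $\partial P$; distances are Euclidean. An instance is a sequence $S=((s_1,d_1),\dots,(s_n,d_n))$ with $s_i<d_i$, $0=s_1\le\dots\le s_n$; point $i$ is present at time $t$ iff $s_i\le t\le d_i$; $T=\max_i d_i$. For locations $X=(X_1,\dots,X_n)\in P^n$, $d_{min}(t;X)=\min\{dis(X_i,\partial P),dis(X_i,X_j)\}$ over present points $i\ne j$ at time $t$, and $OPT_A(S;P)=\max_X\min_{t\le T}d_{min}(t;X)$. In the online ATWC problem, when point $i$ arrives the algorithm must irrevocably choose $X_i\in P$ knowing only past events (not future events nor $n$); an adaptive adversary who knows the algorithm chooses the events. An online algorithm is $\sigma$-competitive for $P$ if for every instance $S$, $OPT_A(S;P)\le\sigma\cdot\min_{t\le T}d_{min}(t;X)$ for its output $X$. *)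

theory Defs
  imports "HOL-Analysis.Analysis" "HOL-Library.Extended_Real"
begin

text \<open>An atwc_instance is a list of (arrival, departure) pairs, indexed from 0.\<close>
type_synonym atwc_instance = "(real \<times> real) list"

definition valid_instance :: "atwc_instance \<Rightarrow> bool" where
  "valid_instance S \<longleftrightarrow> S \<noteq> [] \<and> fst (S ! 0) = 0
     \<and> (\<forall>i < length S. fst (S ! i) < snd (S ! i))
     \<and> (\<forall>i j. i \<le> j \<and> j < length S \<longrightarrow> fst (S ! i) \<le> fst (S ! j))"

definition present :: "atwc_instance \<Rightarrow> nat \<Rightarrow> real \<Rightarrow> bool" where
  "present S i t \<longleftrightarrow> i < length S \<and> fst (S ! i) \<le> t \<and> t \<le> snd (S ! i)"

definition horizon :: "atwc_instance \<Rightarrow> real" where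
  "horizon S = Max (snd ` set S)"

text \<open>d_min(t;X), as an extended real (minimum of the empty set is infinity).\<close>
definition dmin :: "'a::euclidean_space set \<Rightarrow> atwc_instance \<Rightarrow> (nat \<Rightarrow> 'a) \<Rightarrow> real \<Rightarrow> ereal" where
  "dmin P S X t = Inf (ereal ` ({infdist (X i) (frontier P) | i. present S i t}
       \<union> {dist (X i) (X j) | i j. i \<noteq> j \<and> present S i t \<and> present S j t}))"

definition objective :: "'a::euclidean_space set \<Rightarrow> atwc_instance \<Rightarrow> (nat \<Rightarrow> 'a) \<Rightarrow> ereal" where
  "objective P S X = (INF t \<in> {..horizon S}. dmin P S X t)"

definition OPT_A :: "'a::euclidean_space set \<Rightarrow> atwc_instance \<Rightarrow> ereal" where
  "OPT_A P S = (SUP X \<in> {X. \<forall>i < length S. X i \<in> P}. objective P S X)"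

text \<open>Information available to an online algorithm when point i arrives:
  the arrival times of the earlier points together with their departure times
  if these have already occurred (d_j \<le> s_i), and the arrival time s_i.
  Neither future events nor the total number of points are revealed.\<close>
definition history :: "atwc_instance \<Rightarrow> nat \<Rightarrow> (real \<times> real option) list \<times> real" where
  "history S i = (map (\<lambda>j. (fst (S ! j),
        if snd (S ! j) \<le> fst (S ! i) then Some (snd (S ! j)) else None)) [0..<i],
      fst (S ! i))"

text \<open>A deterministic online algorithm (for a fixed polytope) maps the observed history
  to a location.\<close>
type_synonym 'a online_alg = "(real \<times> real option) list \<times> real \<Rightarrow> 'a"

definition run_alg :: "'a online_alg \<Rightarrow> atwc_instance \<Rightarrow> nat \<Rightarrow> 'a" where
  "run_alg A S i = A (history S i)"

definition competitive :: "'a::euclidean_space online_alg \<Rightarrow> real \<Rightarrow> 'a set \<Rightarrow> bool" where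
  "competitive A \<sigma> P \<longleftrightarrow> (\<forall>S. valid_instance S \<longrightarrow>
      (\<forall>i < length S. run_alg A S i \<in> P) \<and>
      OPT_A P S \<le> ereal \<sigma> * objective P S (run_alg A S))"

definition full_dim_polytope :: "'a::euclidean_space set \<Rightarrow> bool" where
  "full_dim_polytope P \<longleftrightarrow> polytope P \<and> aff_dim P = int DIM('a)"

end

theory Submission
  imports Defs
begin

lemma exists_polytope:
  fixes \<epsilon> :: real
  assumes "0 < \<epsilon>"
  shows "\<exists>P::'a::euclidean_space set. polytope P \<and> cball 0 (1 - \<epsilon>) \<subseteq> P \<and> P \<subseteq> cball 0 1"
proof -
  have "cball (0::'a) 1 \<subseteq> (\<Union>c\<in>cball 0 1. ball c \<epsilon>)"
  proof
    fix x :: 'a assume "x \<in> cball 0 1"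
    moreover have "x \<in> ball x \<epsilon>" using assms by simp
    ultimately show "x \<in> (\<Union>c\<in>cball 0 1. ball c \<epsilon>)" by blast
  qed
  then obtain K where K: "K \<subseteq> cball 0 1" "finite K" "cball (0::'a) 1 \<subseteq> (\<Union>c\<in>K. ball c \<epsilon>)"
    using compactE_image[OF compact_cball, of "cball 0 1" "\<lambda>c. ball c \<epsilon>"] by (metis open_ball)
  define P where "P = convex hull K"
  have KP: "K \<subseteq> P" unfolding P_def by (rule hull_subset)
  have pol: "polytope P" unfolding P_def polytope_def using K(2) by blast
  have sub: "P \<subseteq> cball 0 1" unfolding P_def using K(1)
    by (simp add: convex_cball hull_minimal)
  have "y \<in> P" if y: "y \<in> cball 0 (1 - \<epsilon>)" for y
  proof (rule ccontr)
    assume "y \<notin> P"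
    moreover have "convex P" unfolding P_def by (rule convex_convex_hull)
    moreover have "closed P" unfolding P_def using K(2)
      by (simp add: compact_imp_closed finite_imp_compact_convex_hull)
    ultimately obtain a b where ab: "inner a y < b" "\<forall>x\<in>P. inner a x > b"
      using separating_hyperplane_closed_point by blast
    have "(0::'a) \<in> cball 0 1" by simp
    hence "K \<noteq> {}" using K(3) by blast
    then obtain k where kP: "k \<in> P" using KP by blast
    have "a \<noteq> 0"
    proof
      assume a0: "a = 0"
      hence "b > 0" using ab(1) by simp
      moreover have "inner a k > b" using ab(2) kP by blast
      ultimately show False using a0 by simp
    qed
    define u where "u = - a /\<^sub>R norm a"
    have nu: "norm u = 1" using \<open>a \<noteq> 0\<close> by (simp add: u_def)
    hence "u \<in> cball 0 1" by simp
    then obtain v where v: "v \<in> K" "u \<in> ball v \<epsilon>" using K(3) by blast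
    have vP: "v \<in> P" using v(1) KP by blast
    have "inner a v > inner a y" using ab(1) ab(2) vP by force
    hence "inner u v < inner u y"
      using \<open>a \<noteq> 0\<close> by (simp add: u_def divide_simps)
    moreover have "inner u v \<ge> 1 - \<epsilon>"
    proof -
      have e1: "inner u v = inner u u + inner u (v - u)" by (simp add: inner_diff_right)
      have e2: "inner u u = 1" using nu by (simp add: dot_square_norm)
      have e3: "\<bar>inner u (v - u)\<bar> \<le> norm (v - u)"
        using Cauchy_Schwarz_ineq2[of u "v-u"] nu by simp
      have e4: "norm (v - u) < \<epsilon>" using v(2) by (simp add: dist_norm)
      show ?thesis using e1 e2 e3 e4 by linarith
    qed
    moreover have "inner u y \<le> norm y" using norm_cauchy_schwarz[of u y] nu by simp
    ultimately show False using y by simp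
  qed
  thus ?thesis using pol sub by blast
qed

lemma G1:
  fixes P :: "'a::euclidean_space set"
  assumes sub: "P \<subseteq> cball 0 1" and cl: "closed P" and x: "x \<in> P"
  shows "infdist x (frontier P) \<le> 1 - norm x"
proof (cases "x \<in> frontier P")
  case True
  thus ?thesis using sub x by auto
next
  case False
  hence xi: "x \<in> interior P" using x cl by (simp add: frontier_def closure_closed)
  obtain e :: 'a where e: "e \<in> Basis" using nonempty_Basis by blast
  define y where "y = (if x = 0 then e else x /\<^sub>R norm x)"
  have ny: "norm y = 1" using e by (simp add: y_def)
  have nx: "norm x \<le> 1" using sub x by auto
  have dxy: "dist x y = 1 - norm x"
  proof (cases "x = 0")
    case True thus ?thesis using ny by (simp add: y_def dist_norm)
  next
    case False
    have "x - y = (1 - 1 / norm x) *\<^sub>R x" using False by (simp add: y_def algebra_simps divide_inverse)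
    hence "dist x y = \<bar>1 - 1 / norm x\<bar> * norm x" by (simp add: dist_norm)
    also have "\<dots> = \<bar>(1 - 1 / norm x) * norm x\<bar>" by (simp add: abs_mult)
    also have "\<dots> = \<bar>norm x - 1\<bar>" using False by (simp add: algebra_simps)
    also have "\<dots> = 1 - norm x" using nx by simp
    finally show ?thesis .
  qed
  have "interior P \<subseteq> ball 0 1" using interior_mono[OF sub] by simp
  hence yi: "y \<notin> interior P" using ny by auto
  have "closed_segment x y \<inter> frontier (interior P) \<noteq> {}"
    by (rule connected_Int_frontier) (use xi yi in auto)
  then obtain z where z: "z \<in> closed_segment x y" "z \<in> frontier P"
    using frontier_interior_subset by blast
  have "dist x z \<le> dist x y" using dist_in_closed_segment[OF z(1)] by (simp add: dist_commute)
  thus ?thesis using infdist_le2[OF z(2)] dxy by simp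
qed

lemma G2:
  fixes P :: "'a::euclidean_space set"
  assumes sub: "cball 0 \<rho> \<subseteq> P" and ne: "frontier P \<noteq> {}"
  shows "infdist x (frontier P) \<ge> \<rho> - norm x"
proof -
  have bi: "ball 0 \<rho> \<subseteq> interior P" using sub
    by (meson ball_subset_cball interior_maximal open_ball order_trans)
  have "\<rho> - norm x \<le> dist x z" if "z \<in> frontier P" for z
  proof -
    have "z \<notin> interior P" using that by (simp add: frontier_def)
    hence "norm z \<ge> \<rho>" using bi by (force simp: not_less)
    moreover have "norm z \<le> norm x + dist x z"
      using norm_triangle_ineq[of x "z - x"] by (simp add: dist_norm norm_minus_commute)
    ultimately show ?thesis by simp
  qed
  thus ?thesis using ne by (simp add: infdist_notempty cINF_greatest)
qed

lemma dmin_lower: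
  assumes "\<And>i. present S i t \<Longrightarrow> c \<le> infdist (X i) (frontier P)"
      and "\<And>i j. i \<noteq> j \<Longrightarrow> present S i t \<Longrightarrow> present S j t \<Longrightarrow> c \<le> dist (X i) (X j)"
  shows "ereal c \<le> dmin P S X t"
  unfolding dmin_def using assms by (auto intro!: Inf_greatest)

lemma obj_lower:
  assumes "\<And>t. ereal c \<le> dmin P S X t"
  shows "ereal c \<le> objective P S X"
  unfolding objective_def using assms by (auto intro!: INF_greatest)

lemma obj_nonneg: "0 \<le> objective P S X"
proof -
  have "ereal 0 \<le> objective P S X"
    by (rule obj_lower, rule dmin_lower) (auto simp: infdist_nonneg)
  thus ?thesis by (simp add: zero_ereal_def)
qed

lemma obj_upper_bd:
  assumes "0 \<le> horizon S" "present S i 0"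
  shows "objective P S X \<le> ereal (infdist (X i) (frontier P))"
proof -
  have "objective P S X \<le> dmin P S X 0" unfolding objective_def
    using assms(1) by (auto intro: INF_lower)
  also have "\<dots> \<le> ereal (infdist (X i) (frontier P))" unfolding dmin_def
    using assms(2) by (auto intro!: Inf_lower)
  finally show ?thesis .
qed

lemma obj_upper_dist:
  assumes "0 \<le> horizon S" "present S i 0" "present S j 0" "i \<noteq> j"
  shows "objective P S X \<le> ereal (dist (X i) (X j))"
proof -
  have "objective P S X \<le> dmin P S X 0" unfolding objective_def
    using assms(1) by (auto intro: INF_lower)
  also have "\<dots> \<le> ereal (dist (X i) (X j))" unfolding dmin_def
    using assms(2-4) by (auto intro!: Inf_lower)
  finally show ?thesis .
qed

lemma obj_real:
  assumes "objective P S X \<le> ereal d"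
  obtains r where "objective P S X = ereal r" "0 \<le> r" "r \<le> d"
proof -
  have "0 \<le> objective P S X" by (rule obj_nonneg)
  thus ?thesis using assms that by (cases "objective P S X") auto
qed


theorem theorem6:
  assumes "DIM('a::euclidean_space) \<ge> 2"
  shows "\<not> (\<exists>(A :: 'a set \<Rightarrow> 'a online_alg) \<sigma>. \<sigma> < 7/6 \<and>
            (\<forall>P. full_dim_polytope P \<longrightarrow> competitive (A P) \<sigma> P))"
proof
  assume "\<exists>(A :: 'a set \<Rightarrow> 'a online_alg) \<sigma>. \<sigma> < 7/6 \<and>
            (\<forall>P. full_dim_polytope P \<longrightarrow> competitive (A P) \<sigma> P)"
  then obtain A :: "'a set \<Rightarrow> 'a online_alg" and \<sigma> where sig: "\<sigma> < 7/6"
    and comp: "\<And>P. full_dim_polytope P \<Longrightarrow> competitive (A P) \<sigma> P" by blast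
  define \<rho> where "\<rho> = max (1/2) ((6*\<sigma>/7 + 1)/2)"
  have r0: "0 < \<rho>" "\<rho> < 1" "\<sigma> < 7*\<rho>/6" using sig by (auto simp: \<rho>_def max_def)
  obtain P :: "'a set" where pol: "polytope P" and inP: "cball 0 \<rho> \<subseteq> P" and subP: "P \<subseteq> cball 0 1"
    using exists_polytope[of "1 - \<rho>"] r0 by auto
  have clP: "closed P" using pol by (rule polytope_imp_closed)
  obtain e :: 'a where e: "e \<in> Basis" using nonempty_Basis by blast
  have ne: "norm e = 1" using e by simp
  have "aff_dim (ball (0::'a) \<rho>) = int DIM('a)" using r0 by (intro aff_dim_open) auto
  moreover have "aff_dim (ball (0::'a) \<rho>) \<le> aff_dim P"
    using inP ball_subset_cball by (intro aff_dim_subset) blast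
  ultimately have "aff_dim P = int DIM('a)" using aff_dim_le_DIM[of P] by linarith
  hence "full_dim_polytope P" using pol by (simp add: full_dim_polytope_def)
  hence C: "competitive (A P) \<sigma> P" by (rule comp)
  have "(2::real) *\<^sub>R e \<notin> P" using subP ne by auto
  hence "P \<noteq> UNIV" by auto
  moreover have "P \<noteq> {}" using inP r0 by auto
  ultimately have feq: "frontier P \<noteq> {}" by (rule frontier_not_empty[rotated -1, OF _ ])
  define x0 where "x0 = A P ([], 0)"
  define x1 where "x1 = A P ([(0, None)], 0)"
  define S1 :: atwc_instance where "S1 = [(0,1)]"
  define S2 :: atwc_instance where "S2 = [(0,1),(0,1)]"
  have v1: "valid_instance S1" by (simp add: S1_def valid_instance_def)
  have v2: "valid_instance S2"
    by (auto simp: S2_def valid_instance_def nth_Cons split: nat.splits)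
  have h1: "horizon S1 = 1" by (simp add: S1_def horizon_def)
  have h2: "horizon S2 = 1" by (simp add: S2_def horizon_def)
  have p1: "present S1 i t \<longleftrightarrow> i = 0 \<and> 0 \<le> t \<and> t \<le> 1" for i t
    by (auto simp: S1_def present_def)
  have p2: "present S2 i t \<longleftrightarrow> i < 2 \<and> 0 \<le> t \<and> t \<le> 1" for i t
    by (auto simp: S2_def present_def nth_Cons split: nat.splits)
  have ra1: "run_alg (A P) S1 0 = x0" by (simp add: run_alg_def history_def S1_def x0_def)
  have ra20: "run_alg (A P) S2 0 = x0" by (simp add: run_alg_def history_def S2_def x0_def)
  have ra21: "run_alg (A P) S2 1 = x1" by (simp add: run_alg_def history_def S2_def x1_def)
  have x0P: "x0 \<in> P" and c1: "OPT_A P S1 \<le> ereal \<sigma> * objective P S1 (run_alg (A P) S1)"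
    using C v1 ra1 unfolding competitive_def by (auto simp: S1_def)
  have "objective P S1 (run_alg (A P) S1) \<le> ereal (infdist x0 (frontier P))"
    using obj_upper_bd[of S1 0 P "run_alg (A P) S1"] h1 p1 ra1 by simp
  then obtain r1 where r1: "objective P S1 (run_alg (A P) S1) = ereal r1" "0 \<le> r1"
     "r1 \<le> infdist x0 (frontier P)" by (rule obj_real)
  have "ereal \<rho> \<le> objective P S1 (\<lambda>_. 0)"
  proof (rule obj_lower, rule dmin_lower)
    fix i t assume "present S1 i t"
    show "\<rho> \<le> infdist 0 (frontier P)" using G2[OF inP feq, of 0] by simp
  next
    fix i j t assume "i \<noteq> j" "present S1 i t" "present S1 j t"
    thus "\<rho> \<le> dist 0 0" using p1 by simp
  qed
  also have "\<dots> \<le> OPT_A P S1" unfolding OPT_A_def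
    using inP r0 by (intro SUP_upper) auto
  finally have "ereal \<rho> \<le> ereal (\<sigma> * r1)" using c1 r1 by (metis order_trans times_ereal.simps(1))
  hence A1: "\<rho> \<le> \<sigma> * r1" by simp
  have B1: "infdist x0 (frontier P) \<le> 1 - norm x0" by (rule G1[OF subP clP x0P])
  have x1P: "x1 \<in> P" and c2: "OPT_A P S2 \<le> ereal \<sigma> * objective P S2 (run_alg (A P) S2)"
    using C v2 ra21 unfolding competitive_def by (auto simp: S2_def)
  have o21: "objective P S2 (run_alg (A P) S2) \<le> ereal (infdist x1 (frontier P))"
    using obj_upper_bd[of S2 1 P "run_alg (A P) S2"] h2 p2 ra21 by simp
  then obtain r2 where r2: "objective P S2 (run_alg (A P) S2) = ereal r2" "0 \<le> r2"
     "r2 \<le> infdist x1 (frontier P)" by (rule obj_real)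
  have "objective P S2 (run_alg (A P) S2) \<le> ereal (dist x0 x1)"
    using obj_upper_dist[of S2 0 1 P "run_alg (A P) S2"] h2 p2 ra20 ra21 by simp
  hence r2d: "r2 \<le> dist x0 x1" using r2 by simp
  define Y :: "nat \<Rightarrow> 'a" where "Y = (\<lambda>i. if i = 0 then (\<rho>/3) *\<^sub>R e else - ((\<rho>/3) *\<^sub>R e))"
  have nY: "norm (Y i) = \<rho>/3" for i using ne r0 by (simp add: Y_def)
  have "ereal (2*\<rho>/3) \<le> objective P S2 Y"
  proof (rule obj_lower, rule dmin_lower)
    fix i t assume "present S2 i t"
    show "2*\<rho>/3 \<le> infdist (Y i) (frontier P)" using G2[OF inP feq, of "Y i"] nY by simp
  next
    fix i j t assume "i \<noteq> j" "present S2 i t" "present S2 j t"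
    hence "(i = 0 \<and> j = 1) \<or> (i = 1 \<and> j = 0)" using p2 by auto
    moreover have "dist (Y 0) (Y 1) = 2*\<rho>/3"
    proof -
      have "Y 0 - Y 1 = (2*\<rho>/3) *\<^sub>R e" by (simp add: Y_def scaleR_2[symmetric] algebra_simps)
      thus ?thesis using ne r0 by (simp add: dist_norm)
    qed
    ultimately show "2*\<rho>/3 \<le> dist (Y i) (Y j)" by (auto simp: dist_commute)
  qed
  also have "\<dots> \<le> OPT_A P S2" unfolding OPT_A_def
  proof (intro SUP_upper, safe)
    fix i have "Y i \<in> cball 0 \<rho>" using nY[of i] r0 by simp
    thus "Y i \<in> P" using inP by blast
  qed
  finally have "ereal (2*\<rho>/3) \<le> ereal (\<sigma> * r2)" using c2 r2 by (metis order_trans times_ereal.simps(1))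
  hence A2: "2*\<rho>/3 \<le> \<sigma> * r2" by simp
  have B2: "infdist x1 (frontier P) \<le> 1 - norm x1" by (rule G1[OF subP clP x1P])
  have B3: "dist x0 x1 \<le> norm x0 + norm x1" by (simp add: dist_norm norm_triangle_ineq4)
  have spos: "\<sigma> > 0"
  proof (rule ccontr)
    assume "\<not> \<sigma> > 0"
    hence "\<sigma> * r1 \<le> 0" using r1(2) by (simp add: mult_nonpos_nonneg)
    thus False using A1 r0 by simp
  qed
  have "2 * r2 \<le> 1 + norm x0" using r2 B2 r2d B3 by linarith
  hence "\<sigma> * (2 * r2) \<le> \<sigma> * (1 + norm x0)" using spos by simp
  moreover have "\<rho> \<le> \<sigma> * (1 - norm x0)"
    using A1 r1 B1 spos by (smt (verit) mult_left_mono)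
  ultimately have "4*\<rho>/3 \<le> 2*\<sigma> - \<rho>" using A2 by (simp add: algebra_simps)
  thus False using r0 by simp
qed
end
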